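(* Consider a mixed-integer program (the paper's neoadjuvant chance-constrained chemotherapy model) whose variables include effective concentrations $E_{d,s}$ ($d\in\mathcal{D}$, $s\in\{0,\dots,S\}$) and log cell populations $P^{(k)}_{q,s}$ ($q\in\mathcal{Q}$, $s\in\{0,\dots,S\}$, $k\in\{1,\dots,K\}$), and whose constraints include, for all $q,k$ and $s\in\{0,\dots,S-1\}$, $$P^{(k)}_{q,s+1}=P^{(k)}_{q,s}+h\Big(\Lambda\big(\ln N^{(k)}_{q,\infty}-P^{(k)}_{q,s}\big)-\sum_{d\in\mathcal{D}}\eta_{d,q}\exp\big(-\rho_{d,q}\,t(s)\big)E_{d,s}\Big),\qquad P^{(k)}_{q,0}=\ln N^{(k)}_{q,0},$$ where $h>0$, $\Lambda>0$, $\eta_{d,q}\ge 0$, $\rho_{d,q}$ are constants, $t(s)=sh$, and $N^{(k)}_{q,0},N^{(k)}_{q,\infty}>0$ are given scenario data (together with further constraints: linearization of $E_{d,s}=\max\{0,C_{d,s}-\beta_{d,\mathrm{eff}}\}$, discretized pharmacokinetics, chance constraints and operational constraints). Suppose $\Lambda h\le 1$. Let $(\mathbf{E}^{[1]},\mathbf{P}^{[1]})$ and $(\mathbf{E}^{[2]},\mathbf{P}^{[2]})$ be the corresponding components of two feasible solutions of this program, with $E^{[1]}_{d,s}\ge E^{[2]}_{d,s}$ for all $d\in\mathcal{D}$, $s\in\{0,\dots,S\}$. Then $P^{[1],(k)}_{q,S}\le P^{[2],(k)}_{q,S}$ for all $q\in\mathcal{Q}$ and $k\in\{1,\dots,K\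}$.
   Context: $\mathcal{D}$ is a finite set of drugs, $\mathcal{Q}$ a finite set of cancer cell types, and $k\in\{1,\dots,K\}$ indexes scenarios describing tumor heterogeneity (initial populations $N^{(k)}_{q,0}$ and limits $N^{(k)}_{q,\infty}$). $\eta_{d,q}\ge0$ is the fractional kill effect parameter of drug $d$ on cell type $q$ and $\rho_{d,q}$ the temporal resistance parameter. The planning horizon $[0,T]$ is discretized as $t(s)=sh$, $s=0,\dots,S$, $T=Sh$. *)

theory Defs
  imports Complex_Main
begin

definition tgrid :: "real \<Rightarrow> nat \<Rightarrow> real" where
  "tgrid h s = real s * h"

definition pop_dynamics ::
  "'d set \<Rightarrow> 'q set \<Rightarrow> nat \<Rightarrow> nat \<Rightarrow> real \<Rightarrow> real \<Rightarrow> ('d \<Rightarrow> 'q \<Rightarrow> real) \<Rightarrow> ('d \<Rightarrow> 'q \<Rightarrow> real)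
   \<Rightarrow> ('q \<Rightarrow> nat \<Rightarrow> real) \<Rightarrow> ('q \<Rightarrow> nat \<Rightarrow> real)
   \<Rightarrow> ('d \<Rightarrow> nat \<Rightarrow> real) \<Rightarrow> ('q \<Rightarrow> nat \<Rightarrow> nat \<Rightarrow> real) \<Rightarrow> bool" where
  "pop_dynamics D Q K S h Lambda eta rho N0 Ninf E P \<longleftrightarrow>
     (\<forall>q\<in>Q. \<forall>k\<in>{1..K}.
        P q k 0 = ln (N0 q k) \<and>
        (\<forall>s<S. P q k (Suc s) = P q k s + h * (Lambda * (ln (Ninf q k) - P q k s)
            - (\<Sum>d\<in>D. eta d q * exp (- rho d q * tgrid h s) * E d s))))"

end

theory Submission
  imports Defs
begin

theorem theorem5:
  fixes D :: "'d set" and Q :: "'q set" and K S :: nat and h Lambda :: real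
    and eta rho :: "'d \<Rightarrow> 'q \<Rightarrow> real"
    and N0 Ninf :: "'q \<Rightarrow> nat \<Rightarrow> real"
    and E1 E2 :: "'d \<Rightarrow> nat \<Rightarrow> real"
    and P1 P2 :: "'q \<Rightarrow> nat \<Rightarrow> nat \<Rightarrow> real"
  assumes "finite D" and "finite Q"
    and "h > 0" and "Lambda > 0" and "Lambda * h \<le> 1"
    and "\<forall>d\<in>D. \<forall>q\<in>Q. eta d q \<ge> 0"
    and "\<forall>q\<in>Q. \<forall>k\<in>{1..K}. N0 q k > 0 \<and> Ninf q k > 0"
    and "pop_dynamics D Q K S h Lambda eta rho N0 Ninf E1 P1"
    and "pop_dynamics D Q K S h Lambda eta rho N0 Ninf E2 P2"
    and "\<forall>d\<in>D. \<forall>s\<in>{0..S}. E1 d s \<ge> E2 d s"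
  shows "\<forall>q\<in>Q. \<forall>k\<in>{1..K}. P1 q k S \<le> P2 q k S"
  proof (intro ballI)
  fix q k assume q: "q \<in> Q" and k: "k \<in> {1..K}"
  have d1: "P1 q k 0 = ln (N0 q k)" "\<And>s. s < S \<Longrightarrow> P1 q k (Suc s) = P1 q k s + h * (Lambda * (ln (Ninf q k) - P1 q k s)
            - (\<Sum>d\<in>D. eta d q * exp (- rho d q * tgrid h s) * E1 d s))"
    using assms(8) q k unfolding pop_dynamics_def by auto
  have d2: "P2 q k 0 = ln (N0 q k)" "\<And>s. s < S \<Longrightarrow> P2 q k (Suc s) = P2 q k s + h * (Lambda * (ln (Ninf q k) - P2 q k s)
            - (\<Sum>d\<in>D. eta d q * exp (- rho d q * tgrid h s) * E2 d s))"
    using assms(9) q k unfolding pop_dynamics_def by auto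
  have "s \<le> S \<Longrightarrow> P1 q k s \<le> P2 q k s" for s
  proof (induction s)
    case 0 then show ?case using d1 d2 by simp
  next
    case (Suc s)
    then have sS: "s < S" and IH: "P1 q k s \<le> P2 q k s" by auto
    have sum: "(\<Sum>d\<in>D. eta d q * exp (- rho d q * tgrid h s) * E2 d s) \<le> (\<Sum>d\<in>D. eta d q * exp (- rho d q * tgrid h s) * E1 d s)"
    proof (rule sum_mono)
      fix d assume d: "d \<in> D"
      have "0 \<le> eta d q * exp (- rho d q * tgrid h s)" using assms(6) d q by simp
      moreover have "E2 d s \<le> E1 d s" using assms(10) d sS by simp
      ultimately show "eta d q * exp (- rho d q * tgrid h s) * E2 d s \<le> eta d q * exp (- rho d q * tgrid h s) * E1 d s"
        by (simp add: mult_left_mono)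
    qed
    have "(1 - Lambda * h) * P1 q k s \<le> (1 - Lambda * h) * P2 q k s"
      using IH assms(5) by (intro mult_left_mono) auto
    moreover have "h * (\<Sum>d\<in>D. eta d q * exp (- rho d q * tgrid h s) * E2 d s) \<le> h * (\<Sum>d\<in>D. eta d q * exp (- rho d q * tgrid h s) * E1 d s)"
      using sum assms(3) by (intro mult_left_mono) auto
    ultimately show ?case using d1(2)[OF sS] d2(2)[OF sS] by (simp add: algebra_simps)
  qed
  then show "P1 q k S \<le> P2 q k S" by simp
qed

end
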